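(* Assume (FWW) for a flow $\Phi_t$ on $\mathbb{R}^n$ and a $k$-cone $C$. Let $K\subset\mathbb{R}^n$ be a compact invariant set and let $\mathbb{R}^n=E_y\oplus F_y$, $y\in K$, be a $k$-exponential separation of $(\Phi_t,D\Phi_t)$ along $K$ associated with $C$. For $y\in K$ let $P_y$ be the projection onto $E_y$ along $F_y$ and $Q_y=I-P_y$. Then: (i) the projections $P_y$ and $Q_y$ are bounded uniformly in $y\in K$; (ii) there exists a constant $C_1>0$ such that if $v\in\mathbb{R}^n\setminus\{0\}$ satisfies $\|P_y(v)\|\ge C_1\|Q_y(v)\|$ for some $y\in K$, then $v\in\operatorname{Int}C$; (iii) for any $v\in C\setminus\{0\}$ there exists a constant $\delta_3>0$ such that $\|Q_y(v)\|\le\delta_3\|P_y(v)\|$ for every $y\in K$.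
   Context: A closed set $C\subset\mathbb{R}^n$ is a $k$-cone if $lv\in C$ for all $v\in C$, $l\in\mathbb{R}$, and the maximal dimension of a linear subspace contained in $C$ is $k$. $C$ is $k$-solid if there is a $k$-dimensional subspace $W$ with $W\setminus\{0\}\subset\operatorname{Int}C$. Write $x\sim y$ if $x-y\in C$ and $x\approx y$ if $x-y\in\operatorname{Int}C$. A flow $\Phi_t$ is strongly monotone with respect to a $k$-solid cone $C$ if $x\sim y$ implies $\Phi_t(x)\sim\Phi_t(y)$ for $t\ge0$, and $x\ne y$, $x\sim y$ imply $\Phi_t(x)\approx\Phi_t(y)$ for $t>0$. Assumption (FWW): the flow $\Phi_t$ on $\mathbb{R}^n$ is $C^{1,\alpha}$-smooth ($C^1$ with locally $\alpha$-Hölder derivative, $\alpha\in(0,1]$), strongly monotone with respect to the $k$-cone $C$, and $D_x\Phi_t(C\setminus\{0\})\subset\operatorname{Int}C$ for $t>0$. A $k$-exponential separation along a compact invariant set $K$ associated with $C$ consists of continuous (in the Grassmannian gap metric) families of $k$-dimensional subspaces $E_x$ and $(n-k)$-dimensional subspaces $F_x$, $x\in K$, such that: $\mathbb{R}^n=E_x\oplus F_x$; $D_x\Phi_tE_x=E_{\Phi_t(x)}$, $D_x\Phi_tF_x\subset F_{\Phi_t(x)}$ for $t>0$; there are $M>0$, $0<\gamma<1$ with $\|D_x\Phi_tw\|\le M\gamma^t\|D_x\Phi_tv\|$ for all $x\in K$, unit $w\in F_x$, unit $v\in E_x$, $t\ge0$; and $E_x\subset\operatorname{Int}C\cup\{0\}$,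 $F_x\cap C=\{0\}$. *)

theory Defs
  imports "HOL-Analysis.Analysis"
begin

definition is_flow :: "(real \<Rightarrow> 'a::euclidean_space \<Rightarrow> 'a) \<Rightarrow> bool" where
  "is_flow \<Phi> \<longleftrightarrow> (\<forall>x. \<Phi> 0 x = x) \<and> (\<forall>s t x. \<Phi> (s + t) x = \<Phi> s (\<Phi> t x))
     \<and> continuous_on UNIV (\<lambda>(t, x). \<Phi> t x)"

definition flow_C1alpha ::
  "(real \<Rightarrow> 'a::euclidean_space \<Rightarrow> 'a) \<Rightarrow> (real \<Rightarrow> 'a \<Rightarrow> 'a \<Rightarrow> 'a) \<Rightarrow> real \<Rightarrow> bool" where
  "flow_C1alpha \<Phi> D\<Phi> \<alpha> \<longleftrightarrow> 0 < \<alpha> \<and> \<alpha> \<le> 1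
     \<and> (\<forall>t x. (\<Phi> t has_derivative D\<Phi> t x) (at x))
     \<and> (\<forall>t x. \<forall>\<epsilon>>0. \<exists>\<delta>>0. \<forall>y. dist y x < \<delta> \<longrightarrow> onorm (\<lambda>v. D\<Phi> t y v - D\<Phi> t x v) < \<epsilon>)
     \<and> (\<forall>t S. compact S \<longrightarrow> (\<exists>L. \<forall>x\<in>S. \<forall>y\<in>S.
           onorm (\<lambda>v. D\<Phi> t x v - D\<Phi> t y v) \<le> L * dist x y powr \<alpha>))"

definition k_cone :: "'a::euclidean_space set \<Rightarrow> nat \<Rightarrow> bool" where
  "k_cone C k \<longleftrightarrow> closed C \<and> (\<forall>v\<in>C. \<forall>l::real. l *\<^sub>R v \<in> C)
     \<and> (\<exists>W. subspace W \<and> W \<subseteq> C \<and> dim W = k)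
     \<and> (\<forall>W. subspace W \<and> W \<subseteq> C \<longrightarrow> dim W \<le> k)"

definition k_solid :: "'a::euclidean_space set \<Rightarrow> nat \<Rightarrow> bool" where
  "k_solid C k \<longleftrightarrow> (\<exists>W. subspace W \<and> dim W = k \<and> W - {0} \<subseteq> interior C)"

text \<open>x ~ y iff x - y in C; x \<approx> y iff x - y in Int C.\<close>

definition strongly_monotone :: "(real \<Rightarrow> 'a::euclidean_space \<Rightarrow> 'a) \<Rightarrow> 'a set \<Rightarrow> nat \<Rightarrow> bool" where
  "strongly_monotone \<Phi> C k \<longleftrightarrow> k_cone C k \<and> k_solid C k
     \<and> (\<forall>x y t. x - y \<in> C \<and> t \<ge> 0 \<longrightarrow> \<Phi> t x - \<Phi> t y \<in> C)
     \<and> (\<forall>x y t. x \<noteq> y \<and> x - y \<in> C \<and> t > 0 \<longrightarrow> \<Phi> t x - \<Phi> t y \<in> interior C)"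

definition FWW ::
  "(real \<Rightarrow> 'a::euclidean_space \<Rightarrow> 'a) \<Rightarrow> (real \<Rightarrow> 'a \<Rightarrow> 'a \<Rightarrow> 'a) \<Rightarrow> real \<Rightarrow> 'a set \<Rightarrow> nat \<Rightarrow> bool" where
  "FWW \<Phi> D\<Phi> \<alpha> C k \<longleftrightarrow> is_flow \<Phi> \<and> flow_C1alpha \<Phi> D\<Phi> \<alpha> \<and> strongly_monotone \<Phi> C k
     \<and> (\<forall>t x. t > 0 \<longrightarrow> D\<Phi> t x ` (C - {0}) \<subseteq> interior C)"

definition subspace_gap :: "'a::euclidean_space set \<Rightarrow> 'a set \<Rightarrow> real" where
  "subspace_gap V W = max (SUP v\<in>{v\<in>V. norm v = 1}. infdist v W)
                          (SUP w\<in>{w\<in>W. norm w = 1}. infdist w V)"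

definition gap_continuous_on :: "'a::euclidean_space set \<Rightarrow> ('a \<Rightarrow> 'b::euclidean_space set) \<Rightarrow> bool" where
  "gap_continuous_on K E \<longleftrightarrow> (\<forall>x\<in>K. \<forall>\<epsilon>>0. \<exists>\<delta>>0. \<forall>y\<in>K. dist y x < \<delta> \<longrightarrow> subspace_gap (E y) (E x) < \<epsilon>)"

definition invariant_set :: "(real \<Rightarrow> 'a \<Rightarrow> 'a) \<Rightarrow> 'a set \<Rightarrow> bool" where
  "invariant_set \<Phi> K \<longleftrightarrow> (\<forall>t. \<Phi> t ` K = K)"

definition k_exponential_separation ::
  "(real \<Rightarrow> 'a::euclidean_space \<Rightarrow> 'a) \<Rightarrow> (real \<Rightarrow> 'a \<Rightarrow> 'a \<Rightarrow> 'a) \<Rightarrow> 'a set \<Rightarrow> 'a set \<Rightarrow> nat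
     \<Rightarrow> ('a \<Rightarrow> 'a set) \<Rightarrow> ('a \<Rightarrow> 'a set) \<Rightarrow> bool" where
  "k_exponential_separation \<Phi> D\<Phi> K C k E F \<longleftrightarrow>
     (\<forall>x\<in>K. subspace (E x) \<and> dim (E x) = k \<and> subspace (F x) \<and> dim (F x) = DIM('a) - k
        \<and> E x \<inter> F x = {0} \<and> {e + f | e f. e \<in> E x \<and> f \<in> F x} = UNIV)
     \<and> gap_continuous_on K E \<and> gap_continuous_on K F
     \<and> (\<forall>x\<in>K. \<forall>t>0. D\<Phi> t x ` E x = E (\<Phi> t x) \<and> D\<Phi> t x ` F x \<subseteq> F (\<Phi> t x))
     \<and> (\<exists>M>0. \<exists>\<gamma>. 0 < \<gamma> \<and> \<gamma> < 1 \<and>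
          (\<forall>x\<in>K. \<forall>w\<in>F x. \<forall>v\<in>E x. \<forall>t\<ge>0. norm w = 1 \<longrightarrow> norm v = 1 \<longrightarrow>
              norm (D\<Phi> t x w) \<le> M * \<gamma> powr t * norm (D\<Phi> t x v)))
     \<and> (\<forall>x\<in>K. E x \<subseteq> interior C \<union> {0} \<and> F x \<inter> C = {0})"

definition proj_along :: "'a::real_vector set \<Rightarrow> 'a set \<Rightarrow> 'a \<Rightarrow> 'a" where
  "proj_along E F v = (THE e. e \<in> E \<and> v - e \<in> F)"

end

theory Submission
  imports Defs
begin

lemma proj_props:
  fixes E F :: "'a::euclidean_space set"
  assumes "subspace E" "subspace F" "E \<inter> F = {0}" "{e + f | e f. e \<in> E \<and> f \<in> F} = UNIV"
  shows "proj_along E F v \<in> E \<and> v - proj_along E F v \<in> F"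
proof -
  have "v \<in> {e + f | e f. e \<in> E \<and> f \<in> F}" using assms(4) by simp
  then obtain e f where ef: "e \<in> E" "f \<in> F" "v = e + f" by blast
  have "proj_along E F v = e" unfolding proj_along_def
  proof (rule the_equality)
    show "e \<in> E \<and> v - e \<in> F" using ef by simp
    fix e' assume h: "e' \<in> E \<and> v - e' \<in> F"
    have "e' - e \<in> E" using h ef assms(1) by (simp add: subspace_diff)
    moreover have "f - (v - e') \<in> F" by (rule subspace_diff[OF assms(2) ef(2)]) (use h in simp)
    moreover have "f - (v - e') = e' - e" using ef by (simp add: algebra_simps)
    ultimately have "e' - e \<in> E \<inter> F" by simp
    then show "e' = e" using assms(3) by simp
  qed
  then show ?thesis using ef by simp
qed

lemma gap_le:
  fixes V W :: "'a::euclidean_space set"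
  assumes "subspace W" "u \<in> V" "norm u = 1"
  shows "infdist u W \<le> subspace_gap V W"
proof -
  have bdd: "bdd_above ((\<lambda>v. infdist v W) ` {v\<in>V. norm v = 1})"
  proof (rule bdd_aboveI[where M=1])
    fix x assume "x \<in> (\<lambda>v. infdist v W) ` {v\<in>V. norm v = 1}"
    then obtain v where "norm v = 1" "x = infdist v W" by auto
    moreover have "infdist v W \<le> dist v 0" using infdist_le[OF subspace_0[OF assms(1)], of v] by simp
    ultimately show "x \<le> 1" by simp
  qed
  have "infdist u W \<le> (SUP v\<in>{v\<in>V. norm v = 1}. infdist v W)"
    by (rule cSUP_upper) (use assms bdd in auto)
  then show ?thesis unfolding subspace_gap_def by simp
qed

lemma infdist_scale:
  fixes W :: "'a::euclidean_space set"
  assumes "subspace W" "w \<noteq> 0"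
  shows "infdist w W \<le> norm w * infdist (w /\<^sub>R norm w) W"
proof -
  have "closed W" "W \<noteq> {}" using assms(1) closed_subspace subspace_0 by auto
  then obtain s where s: "s \<in> W" "infdist (w /\<^sub>R norm w) W = dist (w /\<^sub>R norm w) s"
    using infdist_attains_inf by blast
  have "norm w *\<^sub>R s \<in> W" using assms(1) s(1) by (simp add: subspace_scale)
  then have "infdist w W \<le> dist w (norm w *\<^sub>R s)" by (rule infdist_le)
  also have "\<dots> = norm w * dist (w /\<^sub>R norm w) s"
  proof -
    have "w - norm w *\<^sub>R s = norm w *\<^sub>R (w /\<^sub>R norm w - s)" using assms(2)
      by (simp add: algebra_simps)
    then show ?thesis by (simp add: dist_norm)
  qed
  finally show ?thesis using s by simp
qed

lemma gap_limit:
  fixes G :: "'a::euclidean_space \<Rightarrow> 'a set"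
  assumes gc: "gap_continuous_on K G" and sub: "\<forall>x\<in>K. subspace (G x)"
    and y: "y \<in> K" and ys: "ys \<longlonglongrightarrow> y" "\<forall>n. ys n \<in> K"
    and ws: "\<forall>n. ws n \<in> G (ys n)" "ws \<longlonglongrightarrow> w"
  shows "w \<in> G y"
proof -
  have sy: "subspace (G y)" using sub y by simp
  have cl: "closed (G y)" "G y \<noteq> {}" using sy closed_subspace subspace_0 by auto
  obtain M where M: "M > 0" "\<forall>n. norm (ws n) \<le> M"
    using convergent_imp_Bseq[OF convergentI[OF ws(2)]] BseqE by metis
  have le: "infdist w (G y) \<le> (M + 1) * e" if e: "e > 0" for e
  proof -
    obtain \<delta> where d: "\<delta> > 0" "\<forall>z\<in>K. dist z y < \<delta> \<longrightarrow> subspace_gap (G z) (G y) < e"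
      using gc y e unfolding gap_continuous_on_def by blast
    have "eventually (\<lambda>n. dist (ys n) y < \<delta>) sequentially" using ys(1) d(1) by (rule tendstoD)
    moreover have "eventually (\<lambda>n. dist (ws n) w < e) sequentially" using ws(2) e by (rule tendstoD)
    ultimately have "eventually (\<lambda>n. dist (ys n) y < \<delta> \<and> dist (ws n) w < e) sequentially"
      by (rule eventually_conj)
    then obtain N where "\<forall>n\<ge>N. dist (ys n) y < \<delta> \<and> dist (ws n) w < e"
      unfolding eventually_sequentially by blast
    then have n: "dist (ys N) y < \<delta>" "dist (ws N) w < e" by auto
    define n where "n = N"
    have n: "dist (ys n) y < \<delta>" "dist (ws n) w < e" using n by (simp_all add: n_def)
    have g: "subspace_gap (G (ys n)) (G y) < e" using d ys(2) n(1) by blast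
    have "infdist (ws n) (G y) \<le> M * e"
    proof (cases "ws n = 0")
      case True
      then show ?thesis using cl sy M e by (simp add: subspace_0)
    next
      case False
      have u1: "ws n /\<^sub>R norm (ws n) \<in> G (ys n)"
        using ws(1) sub ys(2) by (simp add: subspace_scale)
      have "infdist (ws n /\<^sub>R norm (ws n)) (G y) \<le> subspace_gap (G (ys n)) (G y)"
        by (rule gap_le[OF sy u1]) (use False in simp)
      then have "infdist (ws n /\<^sub>R norm (ws n)) (G y) \<le> e" using g by simp
      then have "norm (ws n) * infdist (ws n /\<^sub>R norm (ws n)) (G y) \<le> M * e"
        using M e by (intro mult_mono) (auto simp: infdist_nonneg)
      then show ?thesis using infdist_scale[OF sy False] by simp
    qed
    moreover have "infdist w (G y) \<le> infdist (ws n) (G y) + dist w (ws n)" by (rule infdist_triangle)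
    ultimately show ?thesis using n(2) by (simp add: dist_commute algebra_simps)
  qed
  have "infdist w (G y) \<le> 0"
  proof (rule ccontr)
    assume "\<not> infdist w (G y) \<le> 0"
    then have p: "infdist w (G y) > 0" by simp
    define e where "e = infdist w (G y) / (2 * (M + 1))"
    have "e > 0" using p M by (simp add: e_def)
    have "(M + 1) * e = infdist w (G y) / 2" using M by (simp add: e_def field_simps)
    with le[OF \<open>e > 0\<close>] have "infdist w (G y) \<le> infdist w (G y) / 2" by simp
    then show False using p by simp
  qed
  then have "infdist w (G y) = 0" using infdist_nonneg[of w "G y"] by simp
  then show ?thesis using in_closed_iff_infdist_zero[OF cl] by simp
qed

lemma interior_scale:
  fixes C :: "'a::euclidean_space set"
  assumes "\<forall>v\<in>C. \<forall>l::real. l *\<^sub>R v \<in> C" "v \<in> interior C" "c > 0"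
  shows "c *\<^sub>R v \<in> interior C"
proof -
  have "open ((\<lambda>x. c *\<^sub>R x) ` interior C)" using assms(3) by (simp add: open_scaling)
  moreover have "(\<lambda>x. c *\<^sub>R x) ` interior C \<subseteq> C" using assms(1) interior_subset by blast
  ultimately have "(\<lambda>x. c *\<^sub>R x) ` interior C \<subseteq> interior C" using interior_maximal by blast
  then show ?thesis using assms(2) by blast
qed

theorem lemma3p5:
  fixes \<Phi> :: "real \<Rightarrow> 'a::euclidean_space \<Rightarrow> 'a"
    and D\<Phi> :: "real \<Rightarrow> 'a \<Rightarrow> 'a \<Rightarrow> 'a"
    and \<alpha> :: real and C K :: "'a set" and k :: nat
    and E F :: "'a \<Rightarrow> 'a set" and P Q :: "'a \<Rightarrow> 'a \<Rightarrow> 'a"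
  assumes "FWW \<Phi> D\<Phi> \<alpha> C k"
    and "compact K" and "invariant_set \<Phi> K"
    and "k_exponential_separation \<Phi> D\<Phi> K C k E F"
    and "\<And>y. P y = proj_along (E y) (F y)"
    and "\<And>y v. Q y v = v - P y v"
  shows "(\<exists>B. \<forall>y\<in>K. \<forall>v. norm (P y v) \<le> B * norm v \<and> norm (Q y v) \<le> B * norm v)
    \<and> (\<exists>C1>0. \<forall>v y. v \<noteq> 0 \<and> y \<in> K \<and> norm (P y v) \<ge> C1 * norm (Q y v) \<longrightarrow> v \<in> interior C)
    \<and> (\<forall>v\<in>C - {0}. \<exists>\<delta>3>0. \<forall>y\<in>K. norm (Q y v) \<le> \<delta>3 * norm (P y v))"
proof -
  have sepE: "\<forall>x\<in>K. subspace (E x) \<and> subspace (F x)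
        \<and> E x \<inter> F x = {0} \<and> {e + f | e f. e \<in> E x \<and> f \<in> F x} = UNIV"
    and gE: "gap_continuous_on K E" and gF: "gap_continuous_on K F"
    and cone: "\<forall>x\<in>K. E x \<subseteq> interior C \<union> {0} \<and> F x \<inter> C = {0}"
    using assms(4) unfolding k_exponential_separation_def by auto
  have scal: "\<forall>v\<in>C. \<forall>l::real. l *\<^sub>R v \<in> C"
    using assms(1) unfolding FWW_def strongly_monotone_def k_cone_def by blast
  have subE: "\<forall>x\<in>K. subspace (E x)" and subF: "\<forall>x\<in>K. subspace (F x)" using sepE by auto
  have PQ: "P y v \<in> E y \<and> Q y v \<in> F y \<and> P y v + Q y v = v" if "y \<in> K" for y v
    using proj_props[of "E y" "F y" v] sepE that assms(5,6) by auto
  have sc: "seq_compact (K \<times> sphere (0::'a) 1)"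
    by (intro compact_imp_seq_compact compact_Times assms(2) compact_sphere)
  have PB: "\<exists>B. \<forall>y\<in>K. \<forall>v. norm (P y v) \<le> B * norm v"
  proof (rule ccontr)
    assume nb: "\<not> (\<exists>B. \<forall>y\<in>K. \<forall>v. norm (P y v) \<le> B * norm v)"
    have "\<forall>n. \<exists>y v. y \<in> K \<and> real (Suc n) * norm v < norm (P y v)"
    proof
      fix n
      from nb have "\<not> (\<forall>y\<in>K. \<forall>v. norm (P y v) \<le> real (Suc n) * norm v)" by blast
      then show "\<exists>y v. y \<in> K \<and> real (Suc n) * norm v < norm (P y v)" by (auto simp: not_le)
    qed
    then obtain ys vs where yv: "\<And>n. ys n \<in> K" "\<And>n. real (Suc n) * norm (vs n) < norm (P (ys n) (vs n))"
      by metis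
    define u where "u n = P (ys n) (vs n) /\<^sub>R norm (P (ys n) (vs n))" for n
    define w where "w n = Q (ys n) (vs n) /\<^sub>R norm (P (ys n) (vs n))" for n
    have pos: "norm (P (ys n) (vs n)) > 0" for n
    proof -
      have "0 \<le> real (Suc n) * norm (vs n)" by simp
      then show ?thesis using yv(2)[of n] by linarith
    qed
    have uE: "u n \<in> E (ys n)" for n
      using PQ[OF yv(1)[of n]] subE yv(1)[of n] by (simp add: u_def subspace_scale)
    have wF: "w n \<in> F (ys n)" for n
      using PQ[OF yv(1)[of n]] subF yv(1)[of n] by (simp add: w_def subspace_scale)
    have un: "norm (u n) = 1" for n using pos[of n] by (simp add: u_def)
    have uw: "u n + w n = vs n /\<^sub>R norm (P (ys n) (vs n))" for n
    proof -
      have "u n + w n = (P (ys n) (vs n) + Q (ys n) (vs n)) /\<^sub>R norm (P (ys n) (vs n))"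
        unfolding u_def w_def by (simp add: scaleR_add_right)
      then show ?thesis using PQ[OF yv(1)[of n]] by simp
    qed
    have z0: "(\<lambda>n. u n + w n) \<longlonglongrightarrow> 0"
    proof (rule Lim_null_comparison[where g="\<lambda>n. inverse (real (Suc n))"])
      show "(\<lambda>n. inverse (real (Suc n))) \<longlonglongrightarrow> 0" by (rule LIMSEQ_inverse_real_of_nat)
      have "norm (u n + w n) \<le> inverse (real (Suc n))" for n
      proof -
        have "norm (u n + w n) = norm (vs n) / norm (P (ys n) (vs n))" using uw[of n] pos[of n]
          by (simp add: divide_inverse_commute)
        also have "\<dots> \<le> inverse (real (Suc n))" using pos[of n] yv(2)[of n]
          by (simp add: field_simps)
        finally show ?thesis .
      qed
      then show "\<forall>\<^sub>F n in sequentially. norm (u n + w n) \<le> inverse (real (Suc n))" by simp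
    qed
    have "\<forall>n. (ys n, u n) \<in> K \<times> sphere 0 1" using yv(1) un by simp
    then obtain l r where l: "l \<in> K \<times> sphere 0 1" "strict_mono r" "((\<lambda>n. (ys n, u n)) \<circ> r) \<longlonglongrightarrow> l"
      using seq_compactE[OF sc] by metis
    obtain y u0 where l0: "l = (y, u0)" by (cases l)
    have y: "y \<in> K" and u0n: "norm u0 = 1" using l(1) l0 by auto
    have ys_r: "(\<lambda>n. ys (r n)) \<longlonglongrightarrow> y" using tendsto_fst[OF l(3)] l0 by (simp add: o_def)
    have u_r: "(\<lambda>n. u (r n)) \<longlonglongrightarrow> u0" using tendsto_snd[OF l(3)] l0 by (simp add: o_def)
    have z_r: "(\<lambda>n. u (r n) + w (r n)) \<longlonglongrightarrow> 0"
      using LIMSEQ_subseq_LIMSEQ[OF z0 l(2)] by (simp add: o_def)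
    have w_r: "(\<lambda>n. w (r n)) \<longlonglongrightarrow> - u0" using tendsto_diff[OF z_r u_r] by simp
    have "u0 \<in> E y"
      by (rule gap_limit[OF gE subE y ys_r _ _ u_r]) (use yv(1) uE in auto)
    moreover have "- u0 \<in> F y"
      by (rule gap_limit[OF gF subF y ys_r _ _ w_r]) (use yv(1) wF in auto)
    then have "u0 \<in> F y" using subF y subspace_neg by fastforce
    ultimately have "u0 \<in> E y \<inter> F y" by simp
    then have "u0 = 0" using sepE y by auto
    then show False using u0n by simp
  qed
  then obtain B where B: "\<forall>y\<in>K. \<forall>v. norm (P y v) \<le> B * norm v" by blast
  define B' where "B' = max B 0 + 1"
  have B'0: "B' \<ge> 0" by (simp add: B'_def)
  have part1: "norm (P y v) \<le> B' * norm v \<and> norm (Q y v) \<le> B' * norm v" if "y \<in> K" for y v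
  proof -
    have a: "norm (P y v) \<le> max B 0 * norm v"
      using B that mult_right_mono[OF max.cobounded1[of B 0] norm_ge_zero[of v]] by (meson order_trans)
    have b: "norm (Q y v) \<le> norm v + norm (P y v)" using assms(6)[of y v] norm_triangle_ineq4 by simp
    have c: "B' * norm v = max B 0 * norm v + norm v" by (simp add: B'_def algebra_simps)
    have d: "0 \<le> max B 0 * norm v" by simp
    show ?thesis using a b c d norm_ge_zero[of v] by linarith
  qed
  have part2: "\<exists>C1>0. \<forall>v y. v \<noteq> 0 \<and> y \<in> K \<and> norm (P y v) \<ge> C1 * norm (Q y v) \<longrightarrow> v \<in> interior C"
  proof (rule ccontr)
    assume nc: "\<not> (\<exists>C1>0. \<forall>v y. v \<noteq> 0 \<and> y \<in> K \<and> norm (P y v) \<ge> C1 * norm (Q y v) \<longrightarrow> v \<in> interior C)"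
    have "\<forall>n. \<exists>v y. v \<noteq> 0 \<and> y \<in> K \<and> norm (P y v) \<ge> real (Suc n) * norm (Q y v) \<and> v \<notin> interior C"
    proof
      fix n
      have "real (Suc n) > 0" by simp
      with nc show "\<exists>v y. v \<noteq> 0 \<and> y \<in> K \<and> norm (P y v) \<ge> real (Suc n) * norm (Q y v) \<and> v \<notin> interior C"
        by blast
    qed
    then obtain vs ys where yv: "\<And>n. vs n \<noteq> 0" "\<And>n. ys n \<in> K"
      "\<And>n. norm (P (ys n) (vs n)) \<ge> real (Suc n) * norm (Q (ys n) (vs n))" "\<And>n. vs n \<notin> interior C"
      by metis
    have pos: "norm (P (ys n) (vs n)) > 0" for n
    proof (rule ccontr)
      assume "\<not> norm (P (ys n) (vs n)) > 0"
      then have p0: "P (ys n) (vs n) = 0" by simp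
      then have "real (Suc n) * norm (Q (ys n) (vs n)) \<le> 0" using yv(3)[of n] by simp
      then have "norm (Q (ys n) (vs n)) \<le> 0"
        by (simp add: mult_le_0_iff)
      then have "Q (ys n) (vs n) = 0" by simp
      then have "vs n = 0" using PQ[OF yv(2)[of n], of "vs n"] p0 by simp
      then show False using yv(1) by simp
    qed
    define u where "u n = P (ys n) (vs n) /\<^sub>R norm (P (ys n) (vs n))" for n
    define w where "w n = Q (ys n) (vs n) /\<^sub>R norm (P (ys n) (vs n))" for n
    have uE: "u n \<in> E (ys n)" for n
      using PQ[OF yv(2)[of n]] subE yv(2)[of n] by (simp add: u_def subspace_scale)
    have un: "norm (u n) = 1" for n using pos[of n] by (simp add: u_def)
    have uw: "u n + w n = vs n /\<^sub>R norm (P (ys n) (vs n))" for n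
    proof -
      have "u n + w n = (P (ys n) (vs n) + Q (ys n) (vs n)) /\<^sub>R norm (P (ys n) (vs n))"
        unfolding u_def w_def by (simp add: scaleR_add_right)
      then show ?thesis using PQ[OF yv(2)[of n]] by simp
    qed
    have znot: "u n + w n \<notin> interior C" for n
    proof
      assume "u n + w n \<in> interior C"
      then have "norm (P (ys n) (vs n)) *\<^sub>R (u n + w n) \<in> interior C"
        using interior_scale[OF scal _ pos[of n]] by blast
      then have "vs n \<in> interior C" using uw[of n] pos[of n] by simp
      then show False using yv(4) by simp
    qed
    have w0: "w \<longlonglongrightarrow> 0"
    proof (rule Lim_null_comparison[where g="\<lambda>n. inverse (real (Suc n))"])
      show "(\<lambda>n. inverse (real (Suc n))) \<longlonglongrightarrow> 0" by (rule LIMSEQ_inverse_real_of_nat)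
      have "norm (w n) \<le> inverse (real (Suc n))" for n
      proof -
        have "norm (w n) = norm (Q (ys n) (vs n)) / norm (P (ys n) (vs n))" using pos[of n]
          by (simp add: w_def divide_inverse_commute)
        also have "\<dots> \<le> inverse (real (Suc n))" using pos[of n] yv(3)[of n]
          by (simp add: field_simps)
        finally show ?thesis .
      qed
      then show "\<forall>\<^sub>F n in sequentially. norm (w n) \<le> inverse (real (Suc n))" by simp
    qed
    have "\<forall>n. (ys n, u n) \<in> K \<times> sphere 0 1" using yv(2) un by simp
    then obtain l r where l: "l \<in> K \<times> sphere 0 1" "strict_mono r" "((\<lambda>n. (ys n, u n)) \<circ> r) \<longlonglongrightarrow> l"
      using seq_compactE[OF sc] by metis
    obtain y u0 where l0: "l = (y, u0)" by (cases l)
    have y: "y \<in> K" and u0n: "norm u0 = 1" using l(1) l0 by auto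
    have ys_r: "(\<lambda>n. ys (r n)) \<longlonglongrightarrow> y" using tendsto_fst[OF l(3)] l0 by (simp add: o_def)
    have u_r: "(\<lambda>n. u (r n)) \<longlonglongrightarrow> u0" using tendsto_snd[OF l(3)] l0 by (simp add: o_def)
    have w_r: "(\<lambda>n. w (r n)) \<longlonglongrightarrow> 0"
      using LIMSEQ_subseq_LIMSEQ[OF w0 l(2)] by (simp add: o_def)
    have z_r: "(\<lambda>n. u (r n) + w (r n)) \<longlonglongrightarrow> u0" using tendsto_add[OF u_r w_r] by simp
    have "u0 \<in> E y"
      by (rule gap_limit[OF gE subE y ys_r _ _ u_r]) (use yv(2) uE in auto)
    moreover have "u0 \<noteq> 0" using u0n by auto
    ultimately have "u0 \<in> interior C" using cone y by blast
    then have "eventually (\<lambda>n. u (r n) + w (r n) \<in> interior C) sequentially"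
      using topological_tendstoD[OF z_r] by blast
    then obtain N where "\<forall>n\<ge>N. u (r n) + w (r n) \<in> interior C"
      unfolding eventually_sequentially by blast
    then show False using znot[of "r N"] by simp
  qed
  have part3: "\<exists>\<delta>3>0. \<forall>y\<in>K. norm (Q y v) \<le> \<delta>3 * norm (P y v)" if v: "v \<in> C - {0}" for v
  proof -
    have "\<exists>c>0. \<forall>y\<in>K. c \<le> norm (P y v)"
    proof (rule ccontr)
      assume nc: "\<not> (\<exists>c>0. \<forall>y\<in>K. c \<le> norm (P y v))"
      have "\<forall>n. \<exists>y. y \<in> K \<and> norm (P y v) < inverse (real (Suc n))"
      proof
        fix n
        have "inverse (real (Suc n)) > 0" by simp
        with nc show "\<exists>y. y \<in> K \<and> norm (P y v) < inverse (real (Suc n))"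
          by (meson not_le)
      qed
      then obtain ys where yv: "\<And>n. ys n \<in> K" "\<And>n. norm (P (ys n) v) < inverse (real (Suc n))"
        by metis
      have scK: "seq_compact K" by (intro compact_imp_seq_compact assms(2))
      obtain y r where l: "y \<in> K" "strict_mono r" "(ys \<circ> r) \<longlonglongrightarrow> y"
        using seq_compactE[OF scK] yv(1) by metis
      have ys_r: "(\<lambda>n. ys (r n)) \<longlonglongrightarrow> y" using l(3) by (simp add: o_def)
      have P0: "(\<lambda>n. P (ys (r n)) v) \<longlonglongrightarrow> 0"
      proof (rule Lim_null_comparison[where g="\<lambda>n. inverse (real (Suc (r n)))"])
        show "(\<lambda>n. inverse (real (Suc (r n)))) \<longlonglongrightarrow> 0"
          using LIMSEQ_subseq_LIMSEQ[OF LIMSEQ_inverse_real_of_nat l(2)] by (simp add: o_def)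
        show "\<forall>\<^sub>F n in sequentially. norm (P (ys (r n)) v) \<le> inverse (real (Suc (r n)))"
          using yv(2) less_imp_le by (simp add: less_imp_le)
      qed
      have Q_r: "(\<lambda>n. Q (ys (r n)) v) \<longlonglongrightarrow> v"
        using tendsto_diff[OF tendsto_const[of v] P0] assms(6) by simp
      have "v \<in> F y"
        by (rule gap_limit[OF gF subF l(1) ys_r _ _ Q_r]) (use yv(1) PQ in auto)
      then have "v \<in> F y \<inter> C" using v by simp
      then show False using cone l(1) v by auto
    qed
    then obtain c where c: "c > 0" "\<forall>y\<in>K. c \<le> norm (P y v)" by blast
    define d where "d = B' * norm v / c + 1"
    have "B' * norm v / c \<ge> 0" using B'0 c(1) by simp
    then have d0: "d > 0" by (simp add: d_def)
    have "norm (Q y v) \<le> d * norm (P y v)" if y: "y \<in> K" for y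
    proof -
      have "norm (Q y v) \<le> B' * norm v" using part1[OF y] by simp
      also have "\<dots> = (B' * norm v / c) * c" using c(1) by simp
      also have "\<dots> \<le> (B' * norm v / c) * norm (P y v)"
        using c y B'0 by (intro mult_left_mono) auto
      also have "\<dots> \<le> d * norm (P y v)" by (intro mult_right_mono) (auto simp: d_def)
      finally show ?thesis .
    qed
    then show ?thesis using d0 by blast
  qed
  show ?thesis using part1 part2 part3 by blast
qed

end
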